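(* Let $T$ be a power-bounded continuous linear operator on a Fréchet space $X$ with a translation-invariant metric $d$ inducing its topology. (1) If $T$ is recurrent, then $T$ is invertible, $T^{-1}$ is power-bounded and recurrent, and $T$ is an isometry for the metric $d_T^*(x,y)=\sup_{\ell\ge0}d(T^\ell x,T^\ell y)$. (2) If $T$ is hyper-recurrent, then $\mathrm{Hr}(T)=\mathrm{Hr}(T^{-1})$ and $T^{-1}$ is hyper-recurrent.
   Context: $T$ is power-bounded if every orbit $\{T^nx:n\in\mathbb{N}\}$ is bounded in the topological vector space sense (for every neighbourhood $U$ of $0$ there is $r>0$ with the orbit contained in $zU$ whenever $|z|\ge r$). $x$ is recurrent if $T^{\omega_n}x\to x$ for some strictly increasing sequence $(\omega_n)$ of positive integers; $\mathrm{Rec}(T)$ is the set of recurrent vectors and $T$ is recurrent if $\mathrm{Rec}(T)$ is dense. $\mathfrak{C}$ is the set of strictly increasing sequences $\omega$ with $T^{\omega_n}x\to x$ for some $x\ne0$; $\mathfrak{L}(\omega)=\{x:T^{\omega_n}x\to x\}$. $\mathrm{Hr}(T)$ is the set of $x\in\mathrm{Rec}(T)$ such that $\mathfrak{L}(\omega)$ is dense for every $\omega\in\mathfrak{C}$ with $x\in\mathfrak{L}(\omega)$; a recurrent $T$ is hyper-recurrent if $\mathrm{Hr}(T)\ne\emptyset$. The same notions are used for $T^{-1}$. *)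

theory Defs
  imports "HOL-Analysis.Analysis"
begin

text \<open>A (real) Frechet space whose topology is induced by a translation-invariant
metric: the type is a complete metric space and a real vector space, the metric is
translation invariant, scalar multiplication is jointly continuous, and the space is
locally convex. (Complex Frechet spaces are in particular real Frechet spaces.)\<close>

definition frechet_space :: "'a::{real_vector,complete_space} itself \<Rightarrow> bool" where
  "frechet_space _ \<longleftrightarrow>
     (\<forall>x y z::'a. dist (x + z) (y + z) = dist x y) \<and>
     continuous_on UNIV (\<lambda>p::real \<times> 'a. fst p *\<^sub>R snd p) \<and>
     (\<forall>U::'a set. open U \<and> 0 \<in> U \<longrightarrow> (\<exists>V. open V \<and> convex V \<and> 0 \<in> V \<and> V \<subseteq> U))"

definition tvs_bounded :: "'a::{real_vector,topological_space} set \<Rightarrow> bool" where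
  "tvs_bounded S \<longleftrightarrow>
     (\<forall>U. open U \<and> 0 \<in> U \<longrightarrow> (\<exists>r>0. \<forall>z::real. \<bar>z\<bar> \<ge> r \<longrightarrow> S \<subseteq> (\<lambda>u. z *\<^sub>R u) ` U))"

definition power_bounded :: "('a::{real_vector,topological_space} \<Rightarrow> 'a) \<Rightarrow> bool" where
  "power_bounded T \<longleftrightarrow> (\<forall>x. tvs_bounded (range (\<lambda>n. (T ^^ n) x)))"

definition Lset :: "('a::topological_space \<Rightarrow> 'a) \<Rightarrow> (nat \<Rightarrow> nat) \<Rightarrow> 'a set" where
  "Lset T \<omega> = {x. (\<lambda>n. (T ^^ \<omega> n) x) \<longlonglongrightarrow> x}"

definition pos_strict_seq :: "(nat \<Rightarrow> nat) \<Rightarrow> bool" where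
  "pos_strict_seq \<omega> \<longleftrightarrow> strict_mono \<omega> \<and> (\<forall>n. \<omega> n > 0)"

definition Rec :: "('a::topological_space \<Rightarrow> 'a) \<Rightarrow> 'a set" where
  "Rec T = {x. \<exists>\<omega>. pos_strict_seq \<omega> \<and> x \<in> Lset T \<omega>}"

definition recurrent :: "('a::topological_space \<Rightarrow> 'a) \<Rightarrow> bool" where
  "recurrent T \<longleftrightarrow> closure (Rec T) = UNIV"

definition Cfrak :: "('a::{zero,topological_space} \<Rightarrow> 'a) \<Rightarrow> (nat \<Rightarrow> nat) set" where
  "Cfrak T = {\<omega>. pos_strict_seq \<omega> \<and> (\<exists>x. x \<noteq> 0 \<and> x \<in> Lset T \<omega>)}"

definition Hr :: "('a::{zero,topological_space} \<Rightarrow> 'a) \<Rightarrow> 'a set" where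
  "Hr T = {x \<in> Rec T. \<forall>\<omega>\<in>Cfrak T. x \<in> Lset T \<omega> \<longrightarrow> closure (Lset T \<omega>) = UNIV}"

definition hyper_recurrent :: "('a::{zero,topological_space} \<Rightarrow> 'a) \<Rightarrow> bool" where
  "hyper_recurrent T \<longleftrightarrow> recurrent T \<and> Hr T \<noteq> {}"

definition dT_star :: "('a::metric_space \<Rightarrow> 'a) \<Rightarrow> 'a \<Rightarrow> 'a \<Rightarrow> real" where
  "dT_star T x y = (SUP l. dist ((T ^^ l) x) ((T ^^ l) y))"

end

theory Submission
  imports Defs
begin

locale PB =
  fixes T :: "'a::{real_vector,complete_space} \<Rightarrow> 'a"
  assumes tinv: "\<And>x y z::'a. dist (x + z) (y + z) = dist x y"
    and scont: "continuous_on UNIV (\<lambda>p::real \<times> 'a. fst p *\<^sub>R snd p)"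
    and lin: "linear T" and cont: "continuous_on UNIV T"
    and pb: "power_bounded T"
begin

definition N :: "'a \<Rightarrow> real" where "N x = dist x 0"

lemma dist_N: "dist x y = N (x - y)"
proof -
  have "dist (x - y + y) (0 + y) = dist (x - y) 0" by (rule tinv)
  then show ?thesis by (simp add: N_def)
qed

lemma N_ge0: "N x \<ge> 0" by (simp add: N_def)

lemma N_zero_iff: "N x = 0 \<longleftrightarrow> x = 0" by (simp add: N_def)

lemma N_triangle: "N (x + y) \<le> N x + N y"
proof -
  have "N (x + y) \<le> dist (x + y) y + dist y 0" unfolding N_def by (rule dist_triangle)
  also have "dist (x + y) y = N x"
  proof -
    have "dist (x + y) (0 + y) = dist x 0" by (rule tinv)
    then show ?thesis by (simp add: N_def)
  qed
  finally show ?thesis by (simp add: N_def)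
qed

lemma N_minus: "N (- x) = N x"
proof -
  have "dist (- x + x) (0 + x) = dist (-x) 0" by (rule tinv)
  then show ?thesis by (simp add: N_def dist_commute)
qed

lemma N_diff: "N (x - y) \<le> N x + N y"
  using N_triangle[of x "-y"] N_minus[of y] by simp

lemma N_nat: "N (real n *\<^sub>R x) \<le> real n * N x"
proof (induction n)
  case 0 then show ?case by (simp add: N_def)
next
  case (Suc n)
  have "N (real (Suc n) *\<^sub>R x) = N (real n *\<^sub>R x + x)" by (simp add: algebra_simps)
  also have "\<dots> \<le> N (real n *\<^sub>R x) + N x" by (rule N_triangle)
  also have "\<dots> \<le> real n * N x + N x" using Suc by simp
  finally show ?case by (simp add: algebra_simps)
qed

lemma lin_pow: "linear (T ^^ n)"
proof (induction n)
  case 0 then show ?case by (simp add: linear_id id_def[symmetric])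
next
  case (Suc n)
  have "linear (T \<circ> (T ^^ n))" by (rule linear_compose[OF Suc lin])
  then show ?case by (simp add: comp_def)
qed

lemma cont_pow: "continuous_on UNIV (T ^^ n)"
proof (induction n)
  case 0 then show ?case by (simp add: continuous_on_id)
next
  case (Suc n)
  then show ?case unfolding funpow.simps
    by (metis cont continuous_on_compose subset_UNIV continuous_on_subset image_subset_iff
         continuous_on_compose2 UNIV_I comp_def)
qed

lemma scale_cont: "continuous_on UNIV (\<lambda>x::'a. c *\<^sub>R x)"
proof -
  have "continuous_on UNIV (\<lambda>x::'a. fst (c, x) *\<^sub>R snd (c,x))"
    by (rule continuous_on_compose2[OF scont]) (auto intro!: continuous_intros)
  then show ?thesis by simp
qed

lemma scale_small: "e > 0 \<Longrightarrow> \<exists>h>0. \<forall>t. \<bar>t\<bar> < h \<longrightarrow> N (t *\<^sub>R x) < e"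
proof -
  assume e: "e > 0"
  have "continuous_on UNIV (\<lambda>t::real. fst (t, x) *\<^sub>R snd (t,x))"
    by (rule continuous_on_compose2[OF scont]) (auto intro!: continuous_intros)
  then have "continuous_on UNIV (\<lambda>t::real. t *\<^sub>R x)" by simp
  then obtain h where "h > 0" "\<forall>t. dist t 0 < h \<longrightarrow> dist (t *\<^sub>R x) (0 *\<^sub>R x) < e"
    using e unfolding continuous_on_iff by (meson UNIV_I)
  then show ?thesis by (auto simp: N_def)
qed

lemma N_cont: "continuous_on UNIV f \<Longrightarrow> continuous_on UNIV (\<lambda>x. N (f x))"
  unfolding N_def by (intro continuous_intros) auto

lemma equi: assumes e: "e > 0" shows "\<exists>d>0. \<forall>w. N w < d \<longrightarrow> (\<forall>l. N ((T^^l) w) \<le> e)"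
proof -
  define C where "C n = {x. \<forall>l. N ((T^^l) ((1/real (Suc n)) *\<^sub>R x)) \<le> e/2}" for n
  have clo: "closed (C n)" for n
    unfolding C_def
  proof (intro closed_Collect_all closed_Collect_le continuous_on_const N_cont)
    fix l
    show "continuous_on UNIV (\<lambda>x. (T ^^ l) ((1 / real (Suc n)) *\<^sub>R x))"
      by (rule continuous_on_compose2[OF cont_pow scale_cont]) auto
  qed
  have cover: "\<Union>(range C) = UNIV"
  proof safe
    fix x
    have "tvs_bounded (range (\<lambda>n. (T ^^ n) x))" using pb by (simp add: power_bounded_def)
    then obtain r where r: "r > 0" "\<forall>z. \<bar>z\<bar> \<ge> r \<longrightarrow> range (\<lambda>n. (T ^^ n) x) \<subseteq> (\<lambda>u. z *\<^sub>R u) ` ball 0 (e/2)"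
      unfolding tvs_bounded_def using e by (metis open_ball centre_in_ball half_gt_zero)
    obtain n where n: "r \<le> real n" using real_arch_simple by blast
    have "x \<in> C n" unfolding C_def
    proof safe
      fix l
      have "(T ^^ l) x \<in> (\<lambda>u. real (Suc n) *\<^sub>R u) ` ball 0 (e/2)"
        using r(2)[rule_format, of "real (Suc n)"] n by auto
      then obtain u where u: "u \<in> ball 0 (e/2)" "(T ^^ l) x = real (Suc n) *\<^sub>R u" by auto
      have "(T^^l) ((1/real (Suc n)) *\<^sub>R x) = (1/real (Suc n)) *\<^sub>R (T^^l) x"
        by (rule linear_cmul[OF lin_pow])
      also have "\<dots> = u" using u(2) by simp
      finally show "N ((T^^l) ((1/real (Suc n)) *\<^sub>R x)) \<le> e/2"
        using u(1) by (simp add: N_def dist_commute)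
    qed
    then show "x \<in> \<Union>(range C)" by auto
  qed auto
  have "\<exists>n. interior (C n) \<noteq> {}"
  proof (rule ccontr)
    assume "\<not> ?thesis"
    have "euclidean interior_of \<Union>(range C) = {}"
      proof (rule Baire_category_alt)
      show "completely_metrizable_space (euclidean::'a topology) \<or> locally_compact_space (euclidean::'a topology) \<and> regular_space (euclidean::'a topology)"
        by (rule disjI1, rule completely_metrizable_space_euclidean)
      show "countable (range C)" by simp
      fix S assume "S \<in> range C"
      then obtain k where "S = C k" by (rule rangeE)
      then have "closed S" "interior S = {}"
        using clo[of k] \<open>\<not> (\<exists>n. interior (C n) \<noteq> {})\<close> by auto
      then show "closedin euclidean S \<and> euclidean interior_of S = {}"
        by (simp add: closed_closedin[symmetric])
    qed
    moreover have "euclidean interior_of \<Union>(range C) = (UNIV::'a set)"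
      unfolding cover by simp
    ultimately show False by simp
  qed
  then obtain n a where "a \<in> interior (C n)" by blast
  then obtain h where h: "h > 0" "ball a h \<subseteq> C n" by (auto simp: mem_interior)
  define m where "m = real (Suc n)"
  have m: "m > 0" by (simp add: m_def)
  show ?thesis
  proof (intro exI[of _ "h/m"] conjI allI impI)
    show "h/m > 0" using h m by simp
    fix w l assume w: "N w < h/m"
    have "N (m *\<^sub>R w) \<le> m * N w" unfolding m_def by (rule N_nat)
    also have "\<dots> < h" using w m by (simp add: field_simps)
    finally have "N (m *\<^sub>R w) < h" .
    define v where "v = a + m *\<^sub>R w"
    have "dist a v = N (- (m *\<^sub>R w))" by (simp add: dist_N v_def)
    then have "dist a v = N (m *\<^sub>R w)" by (simp only: N_minus)
    then have "v \<in> C n" using h \<open>N (m *\<^sub>R w) < h\<close> by auto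
    moreover have "a \<in> C n" using h by auto
    ultimately have 1: "N ((T^^l) ((1/m) *\<^sub>R v)) \<le> e/2" and 2: "N ((T^^l) ((1/m) *\<^sub>R a)) \<le> e/2"
      unfolding C_def m_def by auto
    have "w = (1/m) *\<^sub>R v - (1/m) *\<^sub>R a" using m by (simp add: v_def algebra_simps)
    then have "(T^^l) w = (T^^l) ((1/m) *\<^sub>R v) - (T^^l) ((1/m) *\<^sub>R a)"
      by (simp add: linear_diff[OF lin_pow])
    then have "N ((T^^l) w) \<le> N ((T^^l) ((1/m) *\<^sub>R v)) + N ((T^^l) ((1/m) *\<^sub>R a))"
      using N_diff by simp
    then show "N ((T^^l) w) \<le> e" using 1 2 by simp
  qed
qed

lemma bdd: "\<exists>c. \<forall>l. N ((T^^l) x) \<le> c"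
proof -
  obtain d where d: "d > 0" "\<forall>w. N w < d \<longrightarrow> (\<forall>l. N ((T^^l) w) \<le> 1)" using equi[of 1] by auto
  obtain h where h: "h > 0" "\<forall>t. \<bar>t\<bar> < h \<longrightarrow> N (t *\<^sub>R x) < d" using scale_small[OF d(1)] by blast
  obtain n where n: "inverse (real (Suc n)) < h" using reals_Archimedean[OF h(1)] by blast
  define m where "m = real (Suc n)"
  have m: "m > 0" by (simp add: m_def)
  have "N ((1/m) *\<^sub>R x) < d" using h(2) n m by (simp add: m_def divide_inverse)
  then have 1: "N ((T^^l) ((1/m) *\<^sub>R x)) \<le> 1" for l using d(2) by blast
  show ?thesis
  proof (intro exI allI)
    fix l
    have "(T^^l) x = m *\<^sub>R (T^^l) ((1/m) *\<^sub>R x)" using m by (simp add: linear_cmul[OF lin_pow])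
    moreover have "N (m *\<^sub>R u) \<le> m * N u" for u unfolding m_def by (rule N_nat)
    ultimately have "N ((T^^l) x) \<le> m * N ((T^^l) ((1/m) *\<^sub>R x))" by simp
    also have "\<dots> \<le> m * 1" using 1[of l] m by (intro mult_left_mono) auto
    finally show "N ((T^^l) x) \<le> m" by simp
  qed
qed

lemma pow_Suc_app: "(T^^l) (T w) = (T^^Suc l) w"
  by (simp add: funpow_Suc_right del: funpow.simps)

context assumes rec: "recurrent T"
begin

lemma iso1: assumes "\<forall>l. N ((T^^l) (T w)) \<le> c" shows "\<forall>l. N ((T^^l) w) \<le> c"
proof
  fix l show "N ((T^^l) w) \<le> c"
  proof (cases l)
    case (Suc k) then show ?thesis using assms[rule_format, of k] by (simp add: pow_Suc_app)
  next
    case 0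
    have "N w \<le> c + e" if e: "e > 0" for e
    proof -
      obtain d where d: "d > 0" "\<forall>w. N w < d \<longrightarrow> (\<forall>l. N ((T^^l) w) \<le> e/2)"
        using equi[of "e/2"] e by auto
      have "w \<in> closure (Rec T)" using rec by (simp add: recurrent_def)
      then obtain z where z: "z \<in> Rec T" "dist z w < d" using d(1) by (auto simp: closure_approachable)
      then obtain \<omega> where om: "pos_strict_seq \<omega>" "(\<lambda>n. (T ^^ \<omega> n) z) \<longlonglongrightarrow> z"
        by (auto simp: Rec_def Lset_def)
      have zw: "N ((T^^l) (z - w)) \<le> e/2" for l using d(2) z(2) by (simp add: dist_N)
      have "N ((T ^^ \<omega> n) z) \<le> c + e/2" for n
      proof -
        have "\<omega> n > 0" using om(1) by (simp add: pos_strict_seq_def)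
        then obtain k where k: "\<omega> n = Suc k" using gr0_implies_Suc by blast
        have "(T ^^ \<omega> n) z = (T ^^ \<omega> n) w + (T ^^ \<omega> n) (z - w)"
          by (simp add: linear_diff[OF lin_pow])
        then have "N ((T ^^ \<omega> n) z) \<le> N ((T ^^ \<omega> n) w) + N ((T ^^ \<omega> n) (z - w))"
          using N_triangle by simp
        also have "N ((T ^^ \<omega> n) w) \<le> c" using assms[rule_format, of k] k by (simp add: pow_Suc_app)
        finally show ?thesis using zw[of "\<omega> n"] by simp
      qed
      moreover have "(\<lambda>n. N ((T ^^ \<omega> n) z)) \<longlonglongrightarrow> N z"
        unfolding N_def by (intro tendsto_intros om(2))
      ultimately have "N z \<le> c + e/2" by (intro LIMSEQ_le_const2) auto
      moreover have "N w \<le> N z + N (z - w)"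
        using N_diff[of z "z - w"] by simp
      moreover have "N (z - w) \<le> e/2" using zw[of 0] by simp
      ultimately show ?thesis by simp
    qed
    then have "N w \<le> c" by (rule field_le_epsilon)
    then show ?thesis using 0 by simp
  qed
qed

lemma isok: "\<forall>l. N ((T^^l) ((T^^k) w)) \<le> c \<Longrightarrow> \<forall>l. N ((T^^l) w) \<le> c"
proof (induction k arbitrary: w)
  case 0 then show ?case by simp
next
  case (Suc k)
  have "\<forall>l. N ((T^^l) ((T^^k) (T w))) \<le> c" using Suc.prems by (simp add: funpow_Suc_right del: funpow.simps)
  then have "\<forall>l. N ((T^^l) (T w)) \<le> c" by (rule Suc.IH)
  then show ?case by (rule iso1)
qed

lemma injT: "inj T"
proof (rule injI)
  fix x y assume "T x = T y"
  then have "T (x - y) = 0" by (simp add: linear_diff[OF lin])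
  then have "\<forall>l. N ((T^^l) (T (x - y))) \<le> 0" by (simp add: linear_0[OF lin_pow] N_def)
  then have "N ((T^^0) (x - y)) \<le> 0" using iso1 by blast
  then show "x = y" using N_ge0[of "x - y"] N_zero_iff[of "x - y"] by simp
qed

lemma dense_range: "closure (range T) = UNIV"
proof -
  have "Rec T \<subseteq> closure (range T)"
  proof
    fix z assume "z \<in> Rec T"
    then obtain \<omega> where om: "pos_strict_seq \<omega>" "(\<lambda>n. (T ^^ \<omega> n) z) \<longlonglongrightarrow> z"
      by (auto simp: Rec_def Lset_def)
    have "(T ^^ \<omega> n) z \<in> range T" for n
    proof -
      have "\<omega> n > 0" using om(1) by (simp add: pos_strict_seq_def)
      then obtain k where k: "\<omega> n = Suc k" using gr0_implies_Suc by blast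
      then show ?thesis by simp
    qed
    then show "z \<in> closure (range T)" using om(2) unfolding closure_sequential
      by (intro exI[of _ "\<lambda>n. (T ^^ \<omega> n) z"]) auto
  qed
  then have "closure (Rec T) \<subseteq> closure (range T)" by (metis closure_closure closure_mono)
  then show ?thesis using rec by (auto simp: recurrent_def)
qed

lemma surjT: "surj T"
proof -
  have "y \<in> range T" for y
  proof -
    have "y \<in> closure (range T)" using dense_range by simp
    then obtain s where s: "\<forall>n. s n \<in> range T" "s \<longlonglongrightarrow> y" by (auto simp: closure_sequential)
    then have "\<forall>n. \<exists>a. T a = s n" by (metis rangeE)
    then obtain x where x: "\<And>n. T (x n) = s n" using choice[of "\<lambda>n a. T a = s n"] by blast
    have "Cauchy x"
      unfolding Cauchy_def
    proof (intro allI impI)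
      fix e :: real assume e: "e > 0"
      obtain d where d: "d > 0" "\<forall>w. N w < d \<longrightarrow> (\<forall>l. N ((T^^l) w) \<le> e/2)"
        using equi[of "e/2"] e by auto
      have "Cauchy s" using s(2) by (rule LIMSEQ_imp_Cauchy)
      then obtain M where M: "\<forall>m\<ge>M. \<forall>n\<ge>M. dist (s m) (s n) < d" using d(1) unfolding Cauchy_def by blast
      show "\<exists>M. \<forall>m\<ge>M. \<forall>n\<ge>M. dist (x m) (x n) < e"
      proof (intro exI allI impI)
        fix m n assume "M \<le> m" "M \<le> n"
        then have "N (T (x m - x n)) < d" using M x by (simp add: dist_N linear_diff[OF lin])
        then have "\<forall>l. N ((T^^l) (T (x m - x n))) \<le> e/2" using d(2) by blast
        then have "N ((T^^0) (x m - x n)) \<le> e/2" using iso1 by blast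
        then show "dist (x m) (x n) < e" using e by (simp add: dist_N)
      qed
    qed
    then obtain a where a: "x \<longlonglongrightarrow> a" using Cauchy_convergent_iff convergent_def by blast
    have "isCont T a" using cont by (simp add: continuous_on_eq_continuous_at)
    have "(\<lambda>n. T (x n)) \<longlonglongrightarrow> T a" by (rule isCont_tendsto_compose[OF \<open>isCont T a\<close> a])
    moreover have "(\<lambda>n. T (x n)) = s" using x by auto
    ultimately have "T a = y" using s(2) LIMSEQ_unique by metis
    then show ?thesis by blast
  qed
  then show ?thesis by blast
qed

end

context assumes rec: "recurrent T"
begin

lemma bijT: "bij T" using injT[OF rec] surjT[OF rec] by (simp add: bij_def)

lemma TS: "T (inv T y) = y" using surjT[OF rec] by (simp add: surj_f_inv_f)
lemma ST: "inv T (T x) = x" using injT[OF rec] by (simp add: inv_f_f)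

lemma linS: "linear (inv T)"
proof (rule linearI)
  fix x y
  have "inv T (x + y) = inv T (T (inv T x + inv T y))" by (simp add: linear_add[OF lin] TS)
  then show "inv T (x + y) = inv T x + inv T y" by (simp add: ST)
next
  fix c :: real and x
  have "inv T (c *\<^sub>R x) = inv T (T (c *\<^sub>R inv T x))" by (simp add: linear_cmul[OF lin] TS)
  then show "inv T (c *\<^sub>R x) = c *\<^sub>R inv T x" by (simp add: ST)
qed

lemma linS_pow: "linear (inv T ^^ n)"
proof (induction n)
  case 0 then show ?case by (simp add: linear_id id_def[symmetric])
next
  case (Suc n)
  have "linear (inv T \<circ> (inv T ^^ n))" by (rule linear_compose[OF Suc linS])
  then show ?case by (simp add: comp_def)
qed

lemma TS_pow: "(T^^n) ((inv T ^^ n) y) = y"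
proof (induction n arbitrary: y)
  case 0 then show ?case by simp
next
  case (Suc n)
  have "(T^^Suc n) ((inv T ^^ Suc n) y) = (T^^n) (T (inv T ((inv T ^^ n) y)))"
    by (simp only: funpow_Suc_right[of n T] funpow.simps(2)[of n "inv T"] comp_def)
  then show ?case by (simp only: TS Suc.IH)
qed

lemma ST_pow: "(inv T^^n) ((T ^^ n) y) = y"
proof (induction n arbitrary: y)
  case 0 then show ?case by simp
next
  case (Suc n)
  have "(inv T^^Suc n) ((T ^^ Suc n) y) = (inv T^^n) (inv T (T ((T ^^ n) y)))"
    by (simp only: funpow_Suc_right[of n "inv T"] funpow.simps(2)[of n T] comp_def)
  then show ?case by (simp only: ST Suc.IH)
qed

lemma isoS: "\<forall>l. N ((T^^l) w) \<le> c \<Longrightarrow> \<forall>l. N ((T^^l) ((inv T ^^ n) w)) \<le> c"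
  using isok[OF rec, of n "(inv T ^^ n) w" c] by (simp add: TS_pow)

lemma contS: "continuous_on UNIV (inv T)"
  unfolding continuous_on_iff
proof (intro ballI allI impI)
  fix x and e :: real assume e: "e > 0"
  obtain d where d: "d > 0" "\<forall>w. N w < d \<longrightarrow> (\<forall>l. N ((T^^l) w) \<le> e/2)"
    using equi[of "e/2"] e by auto
  show "\<exists>d>0. \<forall>x'\<in>UNIV. dist x' x < d \<longrightarrow> dist (inv T x') (inv T x) < e"
  proof (intro exI[of _ d] conjI ballI impI)
    fix x' assume "dist x' x < d"
    then have "\<forall>l. N ((T^^l) (x' - x)) \<le> e/2" using d(2) by (simp add: dist_N)
    then have "\<forall>l. N ((T^^l) ((inv T ^^ 1) (x' - x))) \<le> e/2" by (rule isoS)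
    then have "N ((T^^0) ((inv T ^^ 1) (x' - x))) \<le> e/2" by blast
    then have "N (inv T (x' - x)) \<le> e/2" by simp
    then show "dist (inv T x') (inv T x) < e" using e by (simp add: dist_N linear_diff[OF linS])
  qed (use d in auto)
qed

lemma pbS: "power_bounded (inv T)"
  unfolding power_bounded_def tvs_bounded_def
proof (intro allI impI)
  fix x and U :: "'a set" assume U: "open U \<and> 0 \<in> U"
  then obtain e where e: "e > 0" "ball 0 e \<subseteq> U" by (meson open_contains_ball)
  obtain d where d: "d > 0" "\<forall>w. N w < d \<longrightarrow> (\<forall>l. N ((T^^l) w) \<le> e/2)"
    using equi[of "e/2"] e by auto
  obtain h where h: "h > 0" "\<forall>t. \<bar>t\<bar> < h \<longrightarrow> N (t *\<^sub>R x) < d" using scale_small[OF d(1)] by blast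
  show "\<exists>r>0. \<forall>z. r \<le> \<bar>z\<bar> \<longrightarrow> range (\<lambda>n. (inv T ^^ n) x) \<subseteq> (\<lambda>u. z *\<^sub>R u) ` U"
  proof (intro exI[of _ "2/h"] conjI allI impI)
    show "2/h > 0" using h by simp
    fix z :: real assume z: "2/h \<le> \<bar>z\<bar>"
    then have zpos: "\<bar>z\<bar> > 0" using h by (smt (verit) divide_pos_pos)
    then have z0: "z \<noteq> 0" by auto
    have "\<bar>1/z\<bar> < h"
    proof -
      have "\<bar>1/z\<bar> = 1/\<bar>z\<bar>" by simp
      also have "\<dots> \<le> 1/(2/h)" using z h zpos by (intro divide_left_mono) (auto simp: zero_less_divide_iff zero_less_mult_iff)
      also have "\<dots> < h" using h by simp
      finally show ?thesis .
    qed
    then have "N ((1/z) *\<^sub>R x) < d" using h(2) by blast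
    then have "\<forall>l. N ((T^^l) ((1/z) *\<^sub>R x)) \<le> e/2" using d(2) by blast
    show "range (\<lambda>n. (inv T ^^ n) x) \<subseteq> (\<lambda>u. z *\<^sub>R u) ` U"
    proof safe
      fix n
      have "\<forall>l. N ((T^^l) ((inv T ^^ n) ((1/z) *\<^sub>R x))) \<le> e/2"
        by (rule isoS) fact
      then have "N ((inv T ^^ n) ((1/z) *\<^sub>R x)) \<le> e/2" by (metis funpow_0)
      then have "(inv T ^^ n) ((1/z) *\<^sub>R x) \<in> U" using e by (auto simp: N_def dist_commute)
      moreover have "(inv T ^^ n) x = z *\<^sub>R (inv T ^^ n) ((1/z) *\<^sub>R x)"
        using z0 by (simp add: linear_cmul[OF linS_pow])
      ultimately show "(inv T ^^ n) x \<in> (\<lambda>u. z *\<^sub>R u) ` U" by blast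
    qed
  qed
qed

lemma Lset_eq: "Lset T \<omega> = Lset (inv T) \<omega>"
proof safe
  fix x assume "x \<in> Lset T \<omega>"
  then have lim: "(\<lambda>n. (T ^^ \<omega> n) x) \<longlonglongrightarrow> x" by (simp add: Lset_def)
  have "(\<lambda>n. (inv T ^^ \<omega> n) x) \<longlonglongrightarrow> x"
    unfolding lim_sequentially
  proof (intro allI impI)
    fix e :: real assume e: "e > 0"
    obtain d where d: "d > 0" "\<forall>w. N w < d \<longrightarrow> (\<forall>l. N ((T^^l) w) \<le> e/2)"
      using equi[of "e/2"] e by auto
    obtain M where M: "\<forall>n\<ge>M. dist ((T ^^ \<omega> n) x) x < d" using lim d(1) unfolding lim_sequentially by blast
    show "\<exists>M. \<forall>n\<ge>M. dist ((inv T ^^ \<omega> n) x) x < e"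
    proof (intro exI[of _ M] allI impI)
      fix n assume "M \<le> n"
      then have "N (x - (T ^^ \<omega> n) x) < d" using M by (simp add: dist_N[symmetric] dist_commute)
      then have "\<forall>l. N ((T^^l) (x - (T ^^ \<omega> n) x)) \<le> e/2" using d(2) by blast
      then have "\<forall>l. N ((T^^l) ((inv T ^^ \<omega> n) (x - (T ^^ \<omega> n) x))) \<le> e/2" by (rule isoS)
      then have "N ((inv T ^^ \<omega> n) (x - (T ^^ \<omega> n) x)) \<le> e/2" by (metis funpow_0)
      then show "dist ((inv T ^^ \<omega> n) x) x < e" using e
        by (simp add: dist_N linear_diff[OF linS_pow] ST_pow)
    qed
  qed
  then show "x \<in> Lset (inv T) \<omega>" by (simp add: Lset_def)
next
  fix x assume "x \<in> Lset (inv T) \<omega>"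
  then have lim: "(\<lambda>n. (inv T ^^ \<omega> n) x) \<longlonglongrightarrow> x" by (simp add: Lset_def)
  have "(\<lambda>n. (T ^^ \<omega> n) x) \<longlonglongrightarrow> x"
    unfolding lim_sequentially
  proof (intro allI impI)
    fix e :: real assume e: "e > 0"
    obtain d where d: "d > 0" "\<forall>w. N w < d \<longrightarrow> (\<forall>l. N ((T^^l) w) \<le> e/2)"
      using equi[of "e/2"] e by auto
    obtain M where M: "\<forall>n\<ge>M. dist ((inv T ^^ \<omega> n) x) x < d" using lim d(1) unfolding lim_sequentially by blast
    show "\<exists>M. \<forall>n\<ge>M. dist ((T ^^ \<omega> n) x) x < e"
    proof (intro exI[of _ M] allI impI)
      fix n assume "M \<le> n"
      then have "N (x - (inv T ^^ \<omega> n) x) < d" using M by (simp add: dist_N[symmetric] dist_commute)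
      then have "N ((T ^^ \<omega> n) (x - (inv T ^^ \<omega> n) x)) \<le> e/2" using d(2) by blast
      then show "dist ((T ^^ \<omega> n) x) x < e" using e
        by (simp add: dist_N linear_diff[OF lin_pow] TS_pow)
    qed
  qed
  then show "x \<in> Lset T \<omega>" by (simp add: Lset_def)
qed

lemma Rec_eq: "Rec T = Rec (inv T)" by (simp add: Rec_def Lset_eq)
lemma Cfrak_eq: "Cfrak T = Cfrak (inv T)" by (simp add: Cfrak_def Lset_eq)
lemma Hr_eq: "Hr T = Hr (inv T)" by (simp add: Hr_def Lset_eq Rec_eq Cfrak_eq)

lemma dT: "dT_star T (T x) (T y) = dT_star T x y"
proof -
  define w where "w = x - y"
  define f where "f l = N ((T^^l) w)" for l
  define g where "g l = N ((T^^l) (T w))" for l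
  have 1: "dT_star T x y = (SUP l. f l)"
    unfolding dT_star_def f_def w_def by (simp add: dist_N linear_diff[OF lin_pow])
  have 2: "dT_star T (T x) (T y) = (SUP l. g l)"
    unfolding dT_star_def g_def w_def by (simp add: dist_N linear_diff[OF lin_pow] linear_diff[OF lin])
  obtain c where c: "\<forall>l. f l \<le> c" using bdd unfolding f_def by blast
  have gf: "g l = f (Suc l)" for l by (simp add: f_def g_def pow_Suc_app)
  have bf: "bdd_above (range f)" using c by (auto intro: bdd_aboveI)
  have bg: "bdd_above (range g)" using c gf by (auto intro!: bdd_aboveI)
  have "(SUP l. g l) \<le> (SUP l. f l)"
    by (rule cSUP_least) (auto simp: gf intro: cSUP_upper[OF _ bf])
  moreover have "(SUP l. f l) \<le> (SUP l. g l)"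
  proof (rule cSUP_least)
    fix l
    have "\<forall>l. N ((T^^l) (T w)) \<le> (SUP l. g l)" using cSUP_upper[OF _ bg] by (auto simp: g_def)
    then have "\<forall>l. N ((T^^l) w) \<le> (SUP l. g l)" by (rule iso1[OF rec])
    then show "f l \<le> (SUP l. g l)" by (simp add: f_def)
  qed simp
  ultimately show ?thesis using 1 2 by simp
qed


end

end

theorem proposition5p1:
  fixes T :: "'a::{real_vector,complete_space} \<Rightarrow> 'a"
  assumes "frechet_space TYPE('a)"
    and "linear T" and "continuous_on UNIV T"
    and "power_bounded T"
  shows "(recurrent T \<longrightarrow>
            bij T \<and> linear (inv T) \<and> continuous_on UNIV (inv T) \<and>
            power_bounded (inv T) \<and> recurrent (inv T) \<and>
            (\<forall>x y. dT_star T (T x) (T y) = dT_star T x y))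
       \<and> (hyper_recurrent T \<longrightarrow> Hr T = Hr (inv T) \<and> hyper_recurrent (inv T))"
proof -
  have tinv: "\<And>x y z::'a. dist (x + z) (y + z) = dist x y"
    and scont: "continuous_on UNIV (\<lambda>p::real \<times> 'a. fst p *\<^sub>R snd p)"
    using assms(1) unfolding frechet_space_def by auto
  interpret PB T
    by (rule PB.intro[OF tinv scont assms(2-4)])
  have A: "recurrent T \<Longrightarrow> recurrent (inv T)"
  proof -
    assume r: "recurrent T"
    then have "closure (Rec T) = UNIV" by (simp only: recurrent_def)
    then show ?thesis by (simp only: recurrent_def Rec_eq[OF r])
  qed
  show ?thesis
  proof (intro conjI impI allI)
    assume r: "recurrent T"
    show "bij T" by (rule bijT[OF r])
    show "linear (inv T)" by (rule linS[OF r])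
    show "continuous_on UNIV (inv T)" by (rule contS[OF r])
    show "power_bounded (inv T)" by (rule pbS[OF r])
    show "recurrent (inv T)" by (rule A[OF r])
    fix x y show "dT_star T (T x) (T y) = dT_star T x y" by (rule dT[OF r])
  next
    assume h: "hyper_recurrent T"
    then have r: "recurrent T" by (simp add: hyper_recurrent_def)
    show "Hr T = Hr (inv T)" by (rule Hr_eq[OF r])
    show "hyper_recurrent (inv T)"
      using h A[OF r] Hr_eq[OF r] unfolding hyper_recurrent_def by metis
  qed
qed

end
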